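(* Let $\{A_n\}_{n\geq1}$ be an increasing sequence of finite sets of isolated points of $\mathbb{R}^2$ with $f(n)=\sharp A_n\to+\infty$, $S=\bigcup_n A_n$, and $\{Z(x):x\in S\}$ a random field whose variables all have distribution function $F$. Let $\tau>0$ and $\{u_n(\tau)\}$ be reals with $E\big(\sum_{x\in A_n}\mathbf{1}_{\{Z(x)>u_n(\tau)\}}\big)\to\tau$. For each $n$ let $\mathcal{B}_n=\{B_n^{(s,t)}:s,t=1,\dots,k_n\}$ be a family of $k_n^2$ pairwise disjoint subsets of $A_n$ with $\sharp B_n^{(s,t)}\sim f(n)/k_n^2$ and $P(\bigvee_{x\in A_n}Z(x)\le u_n(\tau))-\prod_{s,t}P(\bigvee_{x\in B_n^{(s,t)}}Z(x)\le u_n(\tau))\to0$. Suppose $\mathbf{Z}_A=\{Z(x):x\in A_n\}_{n\ge1}$ satisfies conditions $D'(u_n(\tau),\mathcal{B}_n)$ and $D(u_n(\tau),k_n,l_n)$. Then $$P\Big(\bigvee_{x\in A_n}Z(x)\le u_n(\tau)\Big)\longrightarrow e^{-\tau}\quad(n\to\infty).$$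
   Context: $\bigvee$ is maximum; $\pi_1,\pi_2$ coordinate projections; $f_i(n)=\sharp\pi_i(A_n)$. Condition $D'(u_n,\mathcal B_n)$: $\sum_{B\in\mathcal B_n}\sum_{x,y\in B,\,x\neq y}P(Z(x)>u_n,Z(y)>u_n)\to0$ as $n\to\infty$. The pair $(I,J)$ is in $\mathcal{S}(\pi_i(A_n),l_n)$ if $I,J$ are sets of consecutive values of $\pi_i(A_n)$ separated by at least $l_n$ values of $\pi_i(A_n)$. Condition $D(u_n,k_n,l_n)$: there are positive integer sequences $l_n\to\infty$, $k_n\to\infty$ with $k_nl_nf_i(n)/f(n)\to0$ ($i=1,2$) and $k_n^2\alpha(l_n,u_n)\to0$, where $\alpha(l_n,u_n)=\sup|P(\bigvee_{x\in C\cup D}Z(x)\le u_n)-P(\bigvee_{x\in C}Z(x)\le u_n)P(\bigvee_{x\in D}Z(x)\le u_n)|$ over subsets $C,D\subseteq A_n$ whose $\pi_i$-projections form a pair in $\mathcal{S}(\pi_i(A_n),l_n)$ for each $i$. *)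

theory Defs
  imports "HOL-Probability.Probability"
begin

type_synonym point = "real \<times> real"

definition max_le_event :: "'a measure \<Rightarrow> (point \<Rightarrow> 'a \<Rightarrow> real) \<Rightarrow> point set \<Rightarrow> real \<Rightarrow> 'a set" where
  "max_le_event M Z C u = {\<omega> \<in> space M. \<forall>x\<in>C. Z x \<omega> \<le> u}"

definition consecutive_in :: "real set \<Rightarrow> real set \<Rightarrow> bool" where
  "consecutive_in I P \<longleftrightarrow> I \<subseteq> P \<and>
     (\<forall>a\<in>I. \<forall>c\<in>I. \<forall>b\<in>P. a \<le> b \<and> b \<le> c \<longrightarrow> b \<in> I)"

definition sep_pairs :: "real set \<Rightarrow> nat \<Rightarrow> (real set \<times> real set) set" where
  "sep_pairs P l = {(I, J). consecutive_in I P \<and> consecutive_in J P \<and>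
     ((\<forall>a\<in>I. \<forall>b\<in>J. a < b \<and> card {p\<in>P. a < p \<and> p < b} \<ge> l) \<or>
      (\<forall>a\<in>I. \<forall>b\<in>J. b < a \<and> card {p\<in>P. b < p \<and> p < a} \<ge> l))}"

definition adm_pairs :: "point set \<Rightarrow> nat \<Rightarrow> (point set \<times> point set) set" where
  "adm_pairs A l = {(C, D). C \<subseteq> A \<and> D \<subseteq> A \<and>
     (fst ` C, fst ` D) \<in> sep_pairs (fst ` A) l \<and>
     (snd ` C, snd ` D) \<in> sep_pairs (snd ` A) l}"

definition mixing_alpha :: "'a measure \<Rightarrow> (point \<Rightarrow> 'a \<Rightarrow> real) \<Rightarrow> point set \<Rightarrow> nat \<Rightarrow> real \<Rightarrow> real" where
  "mixing_alpha M Z A l u = (SUP p \<in> adm_pairs A l.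
      \<bar>measure M (max_le_event M Z (fst p \<union> snd p) u)
        - measure M (max_le_event M Z (fst p) u) * measure M (max_le_event M Z (snd p) u)\<bar>)"

definition cond_D' :: "'a measure \<Rightarrow> (point \<Rightarrow> 'a \<Rightarrow> real) \<Rightarrow> (nat \<Rightarrow> real) \<Rightarrow>
    (nat \<Rightarrow> nat) \<Rightarrow> (nat \<Rightarrow> nat \<Rightarrow> nat \<Rightarrow> point set) \<Rightarrow> bool" where
  "cond_D' M Z u k B \<longleftrightarrow>
    (\<lambda>n. \<Sum>Bs\<in>{B n s t | s t. s \<in> {1..k n} \<and> t \<in> {1..k n}}.
          \<Sum>(x, y)\<in>{(x, y). x \<in> Bs \<and> y \<in> Bs \<and> x \<noteq> y}.
             measure M {\<omega> \<in> space M. Z x \<omega> > u n \<and> Z y \<omega> > u n}) \<longlonglongrightarrow> 0"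

definition cond_D :: "'a measure \<Rightarrow> (point \<Rightarrow> 'a \<Rightarrow> real) \<Rightarrow> (nat \<Rightarrow> point set) \<Rightarrow>
    (nat \<Rightarrow> real) \<Rightarrow> (nat \<Rightarrow> nat) \<Rightarrow> (nat \<Rightarrow> nat) \<Rightarrow> bool" where
  "cond_D M Z A u k l \<longleftrightarrow>
    (\<forall>n. l n > 0 \<and> k n > 0) \<and> filterlim l at_top sequentially \<and> filterlim k at_top sequentially \<and>
    (\<lambda>n. real (k n) * real (l n) * real (card (fst ` A n)) / real (card (A n))) \<longlonglongrightarrow> 0 \<and>
    (\<lambda>n. real (k n) * real (l n) * real (card (snd ` A n)) / real (card (A n))) \<longlonglongrightarrow> 0 \<and>
    (\<lambda>n. real (k n)^2 * mixing_alpha M Z (A n) (l n) (u n)) \<longlonglongrightarrow> 0"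

end

theory Submission imports Defs begin

lemma bonf_lower:
  assumes P: "prob_space M" and fin: "finite C" and Es: "\<And>x. x \<in> C \<Longrightarrow> E x \<in> sets M"
  shows "(\<Sum>x\<in>C. measure M (E x)) - (\<Sum>x\<in>C. \<Sum>y\<in>C-{x}. measure M (E x \<inter> E y))
         \<le> measure M (\<Union>x\<in>C. E x)"
  using fin Es
proof (induction C rule: finite_induct)
  case empty then show ?case by simp
next
  case (insert a C)
  interpret prob_space M by (rule P)
  let ?U = "\<Union>x\<in>C. E x"
  have Ea: "E a \<in> sets M" using insert.prems by simp
  have EC: "\<And>x. x \<in> C \<Longrightarrow> E x \<in> sets M" using insert.prems by simp
  have U: "?U \<in> sets M" using EC insert.hyps(1) by (intro sets.finite_UN) 
  have IH: "(\<Sum>x\<in>C. measure M (E x)) - (\<Sum>x\<in>C. \<Sum>y\<in>C-{x}. measure M (E x \<inter> E y)) \<le> measure M ?U"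
    by (rule insert.IH[OF EC])
  have un: "measure M (E a \<union> ?U) = measure M (E a) + measure M ?U - measure M (E a \<inter> ?U)"
    using Ea U by (intro measure_Un3) (simp_all add: fmeasurable_def emeasure_finite less_top[symmetric])
  have "measure M (E a \<inter> ?U) = measure M (\<Union>y\<in>C. E a \<inter> E y)" by (simp only: Int_UN_distrib)
  also have "\<dots> \<le> (\<Sum>y\<in>C. measure M (E a \<inter> E y))"
    using insert.hyps(1) Ea EC by (intro finite_measure_subadditive_finite) auto
  finally have I: "measure M (E a \<inter> ?U) \<le> (\<Sum>y\<in>C. measure M (E a \<inter> E y))" .
  have S1: "(\<Sum>x\<in>insert a C. \<Sum>y\<in>insert a C-{x}. measure M (E x \<inter> E y))
     = (\<Sum>y\<in>C. measure M (E a \<inter> E y)) + (\<Sum>x\<in>C. \<Sum>y\<in>insert a C-{x}. measure M (E x \<inter> E y))"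
  proof -
    have "insert a C - {a} = C" using insert.hyps(2) by auto
    then show ?thesis using insert.hyps by (simp add: sum.insert)
  qed
  have S2: "(\<Sum>x\<in>C. \<Sum>y\<in>C-{x}. measure M (E x \<inter> E y)) \<le> (\<Sum>x\<in>C. \<Sum>y\<in>insert a C-{x}. measure M (E x \<inter> E y))"
  proof (rule sum_mono)
    fix x assume "x \<in> C"
    show "(\<Sum>y\<in>C-{x}. measure M (E x \<inter> E y)) \<le> (\<Sum>y\<in>insert a C-{x}. measure M (E x \<inter> E y))"
      using insert.hyps(1) by (intro sum_mono2) auto
  qed
  have S0: "(\<Sum>x\<in>insert a C. measure M (E x)) = measure M (E a) + (\<Sum>x\<in>C. measure M (E x))"
    using insert.hyps by simp
  have UE: "(\<Union>x\<in>insert a C. E x) = E a \<union> ?U" by simp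
  show ?case unfolding UE S0 S1 using IH un I S2 by linarith
qed

lemma rel_err:
  fixes x y d :: real assumes "0 < y" "\<bar>x / y - 1\<bar> < d"
  shows "\<bar>x - y\<bar> \<le> d * y"
proof -
  have "x / y - 1 = (x - y) / y" using assms by (simp add: diff_divide_distrib)
  hence "\<bar>x - y\<bar> / y < d" using assms by simp
  hence "\<bar>x - y\<bar> < d * y" using assms by (simp add: pos_divide_less_eq)
  thus ?thesis by simp
qed

lemma one_minus_ge_exp:
  fixes a m :: real assumes "0 \<le> a" "a \<le> m" "m \<le> 1/2"
  shows "exp (- ((1 + 2*m) * a)) \<le> 1 - a"
proof -
  have "- a - 2 * a\<^sup>2 \<le> ln (1 - a)" using assms by (intro ln_one_minus_pos_lower_bound) auto
  moreover have "a\<^sup>2 \<le> m * a" using assms by (simp add: power2_eq_square mult_right_mono)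
  ultimately have "- ((1 + 2*m) * a) \<le> ln (1 - a)" by (simp add: algebra_simps)
  hence "exp (- ((1 + 2*m) * a)) \<le> exp (ln (1 - a))" by simp
  also have "\<dots> = 1 - a" using assms by simp
  finally show ?thesis .
qed

lemma prod_diff_le:
  fixes x y :: "'i \<Rightarrow> real"
  assumes "finite I" "\<And>i. i \<in> I \<Longrightarrow> 0 \<le> x i \<and> x i \<le> 1" "\<And>i. i \<in> I \<Longrightarrow> 0 \<le> y i \<and> y i \<le> 1"
  shows "\<bar>prod x I - prod y I\<bar> \<le> (\<Sum>i\<in>I. \<bar>x i - y i\<bar>)"
  using assms
proof (induction I rule: finite_induct)
  case empty then show ?case by simp
next
  case (insert a I)
  have h: "0 \<le> prod x I" "prod x I \<le> 1" "0 \<le> prod y I" "prod y I \<le> 1"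
    using insert by (auto intro!: prod_nonneg prod_le_1)
  have xa: "0 \<le> x a" "x a \<le> 1" using insert by auto
  have "prod x (insert a I) - prod y (insert a I) = x a * (prod x I - prod y I) + (x a - y a) * prod y I"
    using insert by (simp add: algebra_simps)
  also have "\<bar>\<dots>\<bar> \<le> \<bar>x a\<bar> * \<bar>prod x I - prod y I\<bar> + \<bar>x a - y a\<bar> * \<bar>prod y I\<bar>"
    by (metis abs_mult abs_triangle_ineq)
  also have "\<dots> \<le> 1 * (\<Sum>i\<in>I. \<bar>x i - y i\<bar>) + \<bar>x a - y a\<bar> * 1"
    using insert h xa by (intro add_mono mult_mono) auto
  finally show ?case using insert by simp
qed

lemma prod_limit:
  fixes a e q :: "nat \<Rightarrow> 'i \<Rightarrow> real" and I :: "nat \<Rightarrow> 'i set" and m :: "nat \<Rightarrow> real"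
  assumes fin: "\<And>n. finite (I n)"
    and a0: "\<And>n i. i \<in> I n \<Longrightarrow> 0 \<le> a n i"
    and q01: "\<And>n i. i \<in> I n \<Longrightarrow> 0 \<le> q n i \<and> q n i \<le> 1"
    and qlo: "\<And>n i. i \<in> I n \<Longrightarrow> 1 - a n i \<le> q n i"
    and qhi: "\<And>n i. i \<in> I n \<Longrightarrow> q n i \<le> 1 - a n i + e n i"
    and Sa: "(\<lambda>n. \<Sum>i\<in>I n. a n i) \<longlonglongrightarrow> \<tau>"
    and Se: "(\<lambda>n. \<Sum>i\<in>I n. e n i) \<longlonglongrightarrow> 0"
    and m0: "m \<longlonglongrightarrow> 0"
    and am: "eventually (\<lambda>n. \<forall>i\<in>I n. a n i \<le> m n) sequentially"
  shows "(\<lambda>n. \<Prod>i\<in>I n. q n i) \<longlonglongrightarrow> exp (- \<tau>)"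
proof -
  define y where "y n = (\<Prod>i\<in>I n. 1 - a n i)" for n
  have mh: "eventually (\<lambda>n. m n \<le> 1/2) sequentially"
  proof -
    have "eventually (\<lambda>n. m n < 1/2) sequentially" using m0 by (rule order_tendstoD) simp
    then show ?thesis by eventually_elim simp
  qed
  have ev: "eventually (\<lambda>n. m n \<le> 1/2 \<and> (\<forall>i\<in>I n. a n i \<le> m n)) sequentially"
    using mh am by eventually_elim auto
  have d: "(\<lambda>n. (\<Prod>i\<in>I n. q n i) - y n) \<longlonglongrightarrow> 0"
  proof (rule Lim_null_comparison[OF _ Se])
    show "\<forall>\<^sub>F n in sequentially. norm ((\<Prod>i\<in>I n. q n i) - y n) \<le> (\<Sum>i\<in>I n. e n i)"
      using ev
    proof eventually_elim
      case (elim n)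
      have "\<bar>(\<Prod>i\<in>I n. q n i) - y n\<bar> \<le> (\<Sum>i\<in>I n. \<bar>q n i - (1 - a n i)\<bar>)"
        unfolding y_def using elim a0 q01 by (intro prod_diff_le fin) force+
      also have "\<dots> \<le> (\<Sum>i\<in>I n. e n i)"
        using qlo qhi by (intro sum_mono) force
      finally show ?case by simp
    qed
  qed
  have up: "(\<lambda>n. exp (- (\<Sum>i\<in>I n. a n i))) \<longlonglongrightarrow> exp (- \<tau>)"
    by (intro tendsto_intros Sa)
  have lo: "(\<lambda>n. exp (- ((1 + 2 * m n) * (\<Sum>i\<in>I n. a n i)))) \<longlonglongrightarrow> exp (- ((1 + 2 * 0) * \<tau>))"
    by (intro tendsto_intros Sa m0)
  have yl: "y \<longlonglongrightarrow> exp (- \<tau>)"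
  proof (rule tendsto_sandwich[OF _ _ lo[simplified] up])
    show "\<forall>\<^sub>F n in sequentially. exp (- ((1 + 2 * m n) * (\<Sum>i\<in>I n. a n i))) \<le> y n"
      using ev
    proof eventually_elim
      case (elim n)
      have "exp (- ((1 + 2 * m n) * (\<Sum>i\<in>I n. a n i))) = (\<Prod>i\<in>I n. exp (- ((1 + 2 * m n) * a n i)))"
        using fin by (simp add: sum_distrib_left exp_sum[symmetric] sum_negf)
      also have "\<dots> \<le> y n" unfolding y_def
        using elim a0 by (intro prod_mono) (auto intro: one_minus_ge_exp)
      finally show ?case .
    qed
    show "\<forall>\<^sub>F n in sequentially. y n \<le> exp (- (\<Sum>i\<in>I n. a n i))"
      using ev
    proof eventually_elim
      case (elim n)
      have ex: "1 - t \<le> exp (- t)" for t :: real using exp_ge_add_one_self[of "- t"] by simp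
      have "y n \<le> (\<Prod>i\<in>I n. exp (- a n i))" unfolding y_def
        using elim a0 ex by (intro prod_mono) auto
      also have "\<dots> = exp (- (\<Sum>i\<in>I n. a n i))"
        using exp_sum[OF fin, of "\<lambda>i. - a n i" n] by (simp add: sum_negf)
      finally show ?case .
    qed
  qed
  have "(\<lambda>n. ((\<Prod>i\<in>I n. q n i) - y n) + y n) \<longlonglongrightarrow> 0 + exp (- \<tau>)"
    by (intro tendsto_add d yl)
  then show ?thesis by simp
qed
theorem proposition3p2:
  fixes M :: "'a measure" and Z :: "point \<Rightarrow> 'a \<Rightarrow> real" and F :: "real \<Rightarrow> real"
    and A :: "nat \<Rightarrow> point set" and \<tau> :: real and u :: "nat \<Rightarrow> real"
    and k :: "nat \<Rightarrow> nat" and l :: "nat \<Rightarrow> nat"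
    and B :: "nat \<Rightarrow> nat \<Rightarrow> nat \<Rightarrow> point set"
  assumes P: "prob_space M"
    and A_mono: "\<And>n. A n \<subseteq> A (Suc n)"
    and A_fin: "\<And>n. finite (A n)"
    and A_card: "filterlim (\<lambda>n. card (A n)) at_top sequentially"
    and isolated: "\<And>x. x \<in> (\<Union>n. A n) \<Longrightarrow> \<not> x islimpt (\<Union>n. A n)"
    and Z_rv: "\<And>x. x \<in> (\<Union>n. A n) \<Longrightarrow> Z x \<in> borel_measurable M"
    and Z_F: "\<And>x t. x \<in> (\<Union>n. A n) \<Longrightarrow> measure M {\<omega> \<in> space M. Z x \<omega> \<le> t} = F t"
    and tau_pos: "\<tau> > 0"
    and u_exp: "(\<lambda>n. integral\<^sup>L M (\<lambda>\<omega>. \<Sum>x\<in>A n. indicator {\<omega>'. Z x \<omega>' > u n} \<omega>)) \<longlonglongrightarrow> \<tau>"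
    and B_sub: "\<And>n s t. s \<in> {1..k n} \<Longrightarrow> t \<in> {1..k n} \<Longrightarrow> B n s t \<subseteq> A n"
    and B_disj: "\<And>n s t s' t'. s \<in> {1..k n} \<Longrightarrow> t \<in> {1..k n} \<Longrightarrow> s' \<in> {1..k n} \<Longrightarrow>
        t' \<in> {1..k n} \<Longrightarrow> (s, t) \<noteq> (s', t') \<Longrightarrow> B n s t \<inter> B n s' t' = {}"
    and B_card: "\<And>e. e > 0 \<Longrightarrow> eventually (\<lambda>n. \<forall>s\<in>{1..k n}. \<forall>t\<in>{1..k n}.
        \<bar>real (card (B n s t)) / (real (card (A n)) / real (k n)^2) - 1\<bar> < e) sequentially"
    and B_approx: "(\<lambda>n. measure M (max_le_event M Z (A n) (u n))
        - (\<Prod>s\<in>{1..k n}. \<Prod>t\<in>{1..k n}. measure M (max_le_event M Z (B n s t) (u n)))) \<longlonglongrightarrow> 0"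
    and D': "cond_D' M Z u k B"
    and D: "cond_D M Z A u k l"
  shows "(\<lambda>n. measure M (max_le_event M Z (A n) (u n))) \<longlonglongrightarrow> exp (- \<tau>)"

proof -
  interpret prob_space M by (rule P)
  define U where "U = (\<Union>n. A n)"
  have AU: "A n \<subseteq> U" for n unfolding U_def by auto
  define E where "E n x = {\<omega> \<in> space M. u n < Z x \<omega>}" for n x
  have Esets: "E n x \<in> sets M" if "x \<in> U" for n x
    using Z_rv[of x] that unfolding E_def U_def borel_measurable_iff_greater by auto
  define p where "p n = 1 - F (u n)" for n
  have Em: "measure M (E n x) = p n" if "x \<in> U" for n x
  proof -
    have eq: "E n x = space M - {\<omega> \<in> space M. Z x \<omega> \<le> u n}" unfolding E_def by auto
    have S: "{\<omega> \<in> space M. Z x \<omega> \<le> u n} \<in> sets M"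
      using Z_rv[of x] that unfolding U_def borel_measurable_iff_le by auto
    have "measure M (E n x) = 1 - measure M {\<omega> \<in> space M. Z x \<omega> \<le> u n}"
      unfolding eq by (rule prob_compl[OF S])
    then show ?thesis using Z_F[of x "u n"] that unfolding p_def U_def by simp
  qed
  have cpos: "eventually (\<lambda>n. 1 \<le> card (A n)) sequentially"
    using A_card unfolding filterlim_at_top by blast
  have Unne: "U \<noteq> {}"
  proof
    assume "U = {}"
    hence "\<And>n. card (A n) = 0" using AU by auto
    moreover have "eventually (\<lambda>n. card (A n) > 0) sequentially"
      using cpos by (rule eventually_mono) simp
    ultimately show False by simp
  qed
  have p0: "0 \<le> p n" for n
  proof -
    obtain x where "x \<in> U" using Unne by auto
    then show ?thesis using Em[of x n] measure_nonneg[of M "E n x"] by simp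
  qed
  define c where "c n = real (card (A n))" for n
  have cp: "(\<lambda>n. c n * p n) \<longlonglongrightarrow> \<tau>"
  proof -
    have "integral\<^sup>L M (\<lambda>\<omega>. \<Sum>x\<in>A n. indicator {\<omega>'. Z x \<omega>' > u n} \<omega> :: real) = c n * p n" for n
    proof -
      have ind: "(\<Sum>x\<in>A n. indicator {\<omega>'. Z x \<omega>' > u n} \<omega>) = (\<Sum>x\<in>A n. indicator (E n x) \<omega> :: real)"
        if "\<omega> \<in> space M" for \<omega> using that unfolding E_def indicator_def by simp
      have "integral\<^sup>L M (\<lambda>\<omega>. \<Sum>x\<in>A n. indicator {\<omega>'. Z x \<omega>' > u n} \<omega>)
          = integral\<^sup>L M (\<lambda>\<omega>. \<Sum>x\<in>A n. indicator (E n x) \<omega> :: real)"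
        by (rule Bochner_Integration.integral_cong[OF refl ind])
      also have "\<dots> = (\<Sum>x\<in>A n. integral\<^sup>L M (indicator (E n x)))"
        using AU Esets by (intro Bochner_Integration.integral_sum integrable_real_indicator) (blast, simp add: emeasure_finite less_top[symmetric])
      also have "\<dots> = (\<Sum>x\<in>A n. p n)"
      proof (rule sum.cong[OF refl])
        fix x assume x: "x \<in> A n"
        have "E n x \<inter> space M = E n x" unfolding E_def by blast
        then show "integral\<^sup>L M (indicator (E n x)) = p n" using Em[of x n] x AU by auto
      qed
      finally show ?thesis by (simp add: c_def)
    qed
    then show ?thesis using u_exp by simp
  qed

  define I where "I n = {1..k n} \<times> {1..k n}" for n
  define Bb where "Bb n = case_prod (B n)" for n
  define a where "a n i = real (card (Bb n i)) * p n" for n i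
  define q where "q n i = measure M (max_le_event M Z (Bb n i) (u n))" for n i
  define g where "g n x y = measure M {\<omega> \<in> space M. Z x \<omega> > u n \<and> Z y \<omega> > u n}" for n x y
  define e where "e n i = (\<Sum>x\<in>Bb n i. \<Sum>y\<in>Bb n i - {x}. g n x y)" for n i
  have finI: "finite (I n)" for n unfolding I_def by simp
  have cardI: "card (I n) = k n ^ 2" for n unfolding I_def by (simp add: power2_eq_square)
  have Bsub: "Bb n i \<subseteq> A n" if iI: "i \<in> I n" for n i
  proof -
    obtain s t where i: "i = (s, t)" "s \<in> {1..k n}" "t \<in> {1..k n}" using iI unfolding I_def by blast
    show ?thesis unfolding i Bb_def using B_sub[OF i(2,3)] by simp
  qed
  have Bfin: "finite (Bb n i)" if "i \<in> I n" for n i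
    using Bsub[OF that] A_fin finite_subset by blast
  have BU: "Bb n i \<subseteq> U" if "i \<in> I n" for n i using Bsub[OF that] AU by blast
  have UE: "(\<Union>x\<in>Bb n i. E n x) \<in> sets M" if "i \<in> I n" for n i
    using Bfin[OF that] BU[OF that] Esets by (intro sets.finite_UN) auto
  have sumE: "(\<Sum>x\<in>Bb n i. measure M (E n x)) = a n i" if iI: "i \<in> I n" for n i
  proof -
    have "(\<Sum>x\<in>Bb n i. measure M (E n x)) = (\<Sum>x\<in>Bb n i. p n)"
      using BU[OF iI] Em by (intro sum.cong refl) blast
    then show ?thesis by (simp add: a_def)
  qed
  have qeq: "q n i = 1 - measure M (\<Union>x\<in>Bb n i. E n x)" if "i \<in> I n" for n i
  proof -
    have "max_le_event M Z (Bb n i) (u n) = space M - (\<Union>x\<in>Bb n i. E n x)"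
      unfolding max_le_event_def E_def by auto
    then show ?thesis unfolding q_def using prob_compl[OF UE[OF that]] by simp
  qed
  have q01: "0 \<le> q n i \<and> q n i \<le> 1" for n i unfolding q_def by simp
  have qlo: "1 - a n i \<le> q n i" if "i \<in> I n" for n i
  proof -
    have "measure M (\<Union>x\<in>Bb n i. E n x) \<le> (\<Sum>x\<in>Bb n i. measure M (E n x))"
      using Bfin[OF that] BU[OF that] Esets by (intro finite_measure_subadditive_finite) auto
    also have "\<dots> = a n i" using sumE[OF that] .
    finally show ?thesis using qeq[OF that] by simp
  qed
  have qhi: "q n i \<le> 1 - a n i + e n i" if "i \<in> I n" for n i
  proof -
    have "(\<Sum>x\<in>Bb n i. measure M (E n x)) - (\<Sum>x\<in>Bb n i. \<Sum>y\<in>Bb n i-{x}. measure M (E n x \<inter> E n y))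
         \<le> measure M (\<Union>x\<in>Bb n i. E n x)"
      using Bfin[OF that] BU[OF that] Esets by (intro bonf_lower P) auto
    moreover have "(\<Sum>x\<in>Bb n i. measure M (E n x)) = a n i" using sumE[OF that] .
    moreover have "(\<Sum>x\<in>Bb n i. \<Sum>y\<in>Bb n i-{x}. measure M (E n x \<inter> E n y)) = e n i"
      unfolding e_def g_def E_def by (intro sum.cong refl arg_cong[where f="measure M"]) auto
    ultimately show ?thesis using qeq[OF that] by simp
  qed
  have Se: "(\<lambda>n. \<Sum>i\<in>I n. e n i) \<longlonglongrightarrow> 0"
  proof -
    have "(\<Sum>Bs\<in>{B n s t | s t. s \<in> {1..k n} \<and> t \<in> {1..k n}}.
          \<Sum>(x, y)\<in>{(x, y). x \<in> Bs \<and> y \<in> Bs \<and> x \<noteq> y}.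
             measure M {\<omega> \<in> space M. Z x \<omega> > u n \<and> Z y \<omega> > u n}) = (\<Sum>i\<in>I n. e n i)" for n
    proof -
      let ?G = "\<lambda>Bs. \<Sum>(x, y)\<in>{(x, y). x \<in> Bs \<and> y \<in> Bs \<and> x \<noteq> y}. g n x y"
      have seteq: "{B n s t | s t. s \<in> {1..k n} \<and> t \<in> {1..k n}} = Bb n ` I n"
        unfolding Bb_def I_def by force
      have Ge: "?G (Bb n i) = e n i" if "i \<in> I n" for i
      proof -
        have "{(x, y). x \<in> Bb n i \<and> y \<in> Bb n i \<and> x \<noteq> y} = Sigma (Bb n i) (\<lambda>x. Bb n i - {x})" by auto
        then show ?thesis unfolding e_def using Bfin[OF that] by (simp add: sum.Sigma)
      qed
      have "(\<Sum>Bs\<in>Bb n ` I n. ?G Bs) = (\<Sum>i\<in>I n. ?G (Bb n i))"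
      proof (subst sum.reindex_nontrivial[OF finI])
        fix i j assume ij: "i \<in> I n" "j \<in> I n" "i \<noteq> j" "Bb n i = Bb n j"
        then have "Bb n i = {}" using B_disj[of "fst i" n "snd i" "fst j" "snd j"]
          unfolding I_def Bb_def by (auto simp: case_prod_beta prod_eq_iff)
        then show "?G (Bb n i) = 0" by simp
      qed simp
      also have "\<dots> = (\<Sum>i\<in>I n. e n i)" using Ge by simp
      finally show ?thesis unfolding seteq g_def .
    qed
    then show ?thesis using D' unfolding cond_D'_def by simp
  qed

  have kpos: "k n > 0" for n using D unfolding cond_D_def by blast
  have ktop: "filterlim k at_top sequentially" using D unfolding cond_D_def by blast
  have cptop: "eventually (\<lambda>n. c n * p n < \<tau> + 1) sequentially"
    using cp by (rule order_tendstoD) simp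
  have cge: "eventually (\<lambda>n. 1 \<le> c n) sequentially"
    using cpos by (rule eventually_mono) (simp add: c_def)
  have blk: "\<bar>real (card (Bb n i)) - c n / real (k n)^2\<bar> \<le> d * (c n / real (k n)^2)"
    if "i \<in> I n" "1 \<le> c n" "\<forall>s\<in>{1..k n}. \<forall>t\<in>{1..k n}.
        \<bar>real (card (B n s t)) / (real (card (A n)) / real (k n)^2) - 1\<bar> < d" for n i d
  proof (rule rel_err)
    show "0 < c n / real (k n)^2" using that(2) kpos[of n] by simp
    show "\<bar>real (card (Bb n i)) / (c n / real (k n)^2) - 1\<bar> < d"
      using that unfolding I_def Bb_def c_def by (auto simp: case_prod_beta)
  qed
  have sumc: "(\<Sum>i\<in>I n. c n / real (k n)^2) = c n" for n
    using kpos[of n] by (simp add: cardI)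
  have Sa: "(\<lambda>n. \<Sum>i\<in>I n. a n i) \<longlonglongrightarrow> \<tau>"
  proof -
    have "(\<lambda>n. (\<Sum>i\<in>I n. a n i) - c n * p n) \<longlonglongrightarrow> 0"
    proof (rule tendstoI)
      fix \<epsilon> :: real assume ep: "0 < \<epsilon>"
      define d where "d = \<epsilon> / (2 * (\<tau> + 1))"
      have d0: "0 < d" using ep tau_pos by (simp add: d_def)
      show "eventually (\<lambda>n. dist ((\<Sum>i\<in>I n. a n i) - c n * p n) 0 < \<epsilon>) sequentially"
        using cptop cge B_card[OF d0]
      proof eventually_elim
        case (elim n)
        have "\<bar>(\<Sum>i\<in>I n. real (card (Bb n i))) - c n\<bar>
            = \<bar>\<Sum>i\<in>I n. (real (card (Bb n i)) - c n / real (k n)^2)\<bar>"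
          unfolding sum_subtractf sumc ..
        also have "\<dots> \<le> (\<Sum>i\<in>I n. \<bar>real (card (Bb n i)) - c n / real (k n)^2\<bar>)"
          by (rule sum_abs)
        also have "\<dots> \<le> (\<Sum>i\<in>I n. d * (c n / real (k n)^2))"
          using elim by (intro sum_mono blk) auto
        also have "\<dots> = d * c n" unfolding sum_distrib_left[symmetric] sumc ..
        finally have h: "\<bar>(\<Sum>i\<in>I n. real (card (Bb n i))) - c n\<bar> \<le> d * c n" .
        have "(\<Sum>i\<in>I n. a n i) - c n * p n = p n * ((\<Sum>i\<in>I n. real (card (Bb n i))) - c n)"
          unfolding a_def by (simp add: sum_distrib_left sum_distrib_right algebra_simps)
        hence "\<bar>(\<Sum>i\<in>I n. a n i) - c n * p n\<bar> = p n * \<bar>(\<Sum>i\<in>I n. real (card (Bb n i))) - c n\<bar>"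
          using p0[of n] by (simp add: abs_mult)
        also have "\<dots> \<le> p n * (d * c n)" using h p0[of n] by (intro mult_left_mono)
        also have "\<dots> = d * (c n * p n)" by simp
        also have "\<dots> \<le> d * (\<tau> + 1)" using elim d0 by (intro mult_left_mono) auto
        also have "\<dots> < \<epsilon>" using ep tau_pos unfolding d_def by (simp add: field_simps add_pos_pos)
        finally show ?case by (simp add: dist_real_def)
      qed
    qed
    from tendsto_add[OF this cp] show ?thesis by simp
  qed
  define m where "m n = 2 * (c n * p n) / real (k n)^2" for n
  have m0: "m \<longlonglongrightarrow> 0"
  proof -
    have "filterlim (\<lambda>n. real (k n)) at_top sequentially"
      using filterlim_compose[OF filterlim_real_sequentially ktop] by (simp add: o_def)
    hence "filterlim (\<lambda>n. real (k n)^2) at_top sequentially"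
      by (rule filterlim_at_top_mono) (auto simp: power2_eq_square intro!: eventuallyI
          simp add: mult_le_cancel_left1 kpos Suc_le_eq)
    hence fi: "filterlim (\<lambda>n. real (k n)^2) at_infinity sequentially"
      by (rule filterlim_at_top_imp_at_infinity)
    have tm: "(\<lambda>n. 2 * (c n * p n)) \<longlonglongrightarrow> 2 * \<tau>" by (intro tendsto_intros cp)
    show ?thesis unfolding m_def by (rule tendsto_divide_0[OF tm fi])
  qed
  have am: "eventually (\<lambda>n. \<forall>i\<in>I n. a n i \<le> m n) sequentially"
    using cge B_card[OF zero_less_one]
  proof eventually_elim
    case (elim n)
    show ?case
    proof
      fix i assume i: "i \<in> I n"
      have "\<bar>real (card (Bb n i)) - c n / real (k n)^2\<bar> \<le> 1 * (c n / real (k n)^2)"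
        using elim i by (intro blk) auto
      hence "real (card (Bb n i)) \<le> 2 * (c n / real (k n)^2)" by simp
      hence "real (card (Bb n i)) * p n \<le> 2 * (c n / real (k n)^2) * p n"
        using p0[of n] by (rule mult_right_mono)
      then show "a n i \<le> m n" unfolding a_def m_def by simp
    qed
  qed
  have lim: "(\<lambda>n. \<Prod>i\<in>I n. q n i) \<longlonglongrightarrow> exp (- \<tau>)"
    by (rule prod_limit[OF finI _ q01 qlo qhi Sa Se m0 am]) (simp add: a_def p0)
  have peq: "(\<Prod>s\<in>{1..k n}. \<Prod>t\<in>{1..k n}. measure M (max_le_event M Z (B n s t) (u n)))
      = (\<Prod>i\<in>I n. q n i)" for n
    unfolding I_def q_def Bb_def by (simp add: prod.cartesian_product case_prod_beta')
  have "(\<lambda>n. (measure M (max_le_event M Z (A n) (u n))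
        - (\<Prod>s\<in>{1..k n}. \<Prod>t\<in>{1..k n}. measure M (max_le_event M Z (B n s t) (u n))))
        + (\<Prod>i\<in>I n. q n i)) \<longlonglongrightarrow> 0 + exp (- \<tau>)"
    by (intro tendsto_add B_approx lim)
  then show ?thesis unfolding peq by simp
qed

end
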